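(* Let $n\geqslant 3$, $\mathbf{y}\in\mathbb{N}^n$ (positive integers), $1\leqslant r\leqslant n-1$ and $X\geqslant 1$. Then $$\#\mathcal{A}_r(\mathbf{y},X)=2^{n-r}\prod_{j=r+1}^n\frac{X}{d_1^{(j-1)}}+O\left(X^{n-r-1}\right),$$ with an implied constant independent of $\mathbf{y}$ and $X$.
   Context: Let $N=2^n-1$; for $h\in\{1,\dots,N\}$ write $h=\sum_{j=1}^n\varepsilon_j(h)2^{j-1}$, $\varepsilon_j(h)\in\{0,1\}$; $h\preceq\ell$ means $\varepsilon_j(h)\leqslant\varepsilon_j(\ell)$ for all $j$. There is a unique $N$-tuple $(z_h)$ of positive integers which is reduced (i.e. $\gcd(z_h,z_\ell)=1$ whenever $h,\ell$ are incomparable for $\preceq$) with $y_j=\prod_h z_h^{\varepsilon_j(h)}$ for all $j$; fix it. Put $d_i=\prod_{h}z_h^{1-\varepsilon_i(h)}$ for $1\leqslant i\leqslant n$; $d_{1,r}=\prod_{h:\ \varepsilon_1(h)=\cdots=\varepsilon_r(h)=0}z_h$ for $1\leqslant r\leqslant n$ (so $d_{1,1}=d_1$); and for $2\leqslant r\leqslant n$, $d_1^{(r-1)}=\prod_{h:\ \varepsilon_1(h)=\cdots=\varepsilon_{r-1}(h)=0,\ \varepsilon_r(h)=1}z_h$. Finally $$\mathcal{A}_r(\mathbf{y},X)=\Big\{(\alpha_{r+1},\dots,\alpha_n)\in\mathbb{Z}^{n-r}:\ \max_{r+1\leqslant i\leqslant n}|\alpha_i|\leqslant X,\ \sum_{i=r+1}^n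 d_i\alpha_i\equiv 0 \pmod{d_{1,r}}\Big\}.$$ *)

theory Defs
  imports Complex_Main "HOL-Library.FuncSet"
begin

definition eps :: "nat \<Rightarrow> nat \<Rightarrow> nat" where
  "eps j h = (h div 2 ^ (j - 1)) mod 2"

definition prec :: "nat \<Rightarrow> nat \<Rightarrow> nat \<Rightarrow> bool" where
  "prec n h l \<longleftrightarrow> (\<forall>j\<in>{1..n}. eps j h \<le> eps j l)"

definition idxN :: "nat \<Rightarrow> nat set" where
  "idxN n = {1..2 ^ n - 1}"

definition reduced_rep :: "nat \<Rightarrow> (nat \<Rightarrow> nat) \<Rightarrow> (nat \<Rightarrow> nat) \<Rightarrow> bool" where
  "reduced_rep n y z \<longleftrightarrow>
     (\<forall>h\<in>idxN n. z h > 0) \<and>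
     (\<forall>h\<in>idxN n. \<forall>l\<in>idxN n. \<not> prec n h l \<and> \<not> prec n l h \<longrightarrow> coprime (z h) (z l)) \<and>
     (\<forall>j\<in>{1..n}. y j = (\<Prod>h\<in>idxN n. z h ^ eps j h))"

definition dd :: "nat \<Rightarrow> (nat \<Rightarrow> nat) \<Rightarrow> nat \<Rightarrow> nat" where
  "dd n z i = (\<Prod>h\<in>idxN n. z h ^ (1 - eps i h))"

definition d1r :: "nat \<Rightarrow> (nat \<Rightarrow> nat) \<Rightarrow> nat \<Rightarrow> nat" where
  "d1r n z r = (\<Prod>h\<in>{h\<in>idxN n. \<forall>i\<in>{1..r}. eps i h = 0}. z h)"

definition d1sup :: "nat \<Rightarrow> (nat \<Rightarrow> nat) \<Rightarrow> nat \<Rightarrow> nat" where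
  "d1sup n z k = (\<Prod>h\<in>{h\<in>idxN n. (\<forall>i\<in>{1..k}. eps i h = 0) \<and> eps (k + 1) h = 1}. z h)"

text \<open>A_r(y,X): tuples (alpha_{r+1},...,alpha_n), encoded as extensional functions on {r+1..n}.\<close>
definition A_set :: "nat \<Rightarrow> (nat \<Rightarrow> nat) \<Rightarrow> nat \<Rightarrow> real \<Rightarrow> (nat \<Rightarrow> int) set" where
  "A_set n z r X = {\<alpha> \<in> PiE {r+1..n} (\<lambda>_. {a::int. \<bar>real_of_int a\<bar> \<le> X}).
      int (d1r n z r) dvd (\<Sum>i=r+1..n. int (dd n z i) * \<alpha> i)}"

end

theory Submission imports Defs "HOL-Computational_Algebra.Primes" begin

definition BX :: "real \<Rightarrow> int set" where "BX X = {a::int. \<bar>real_of_int a\<bar> \<le> X}"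

lemma class_count:
  fixes M t :: int and X :: real
  assumes M: "M > 0" and X: "X \<ge> 0"
  shows "\<bar>real (card {a \<in> BX X. M dvd (a - t)}) - 2 * X / M\<bar> \<le> 1"
proof -
  have Mr: "real_of_int M > 0" using M by simp
  define lo where "lo = \<lceil>(- X - t) / M\<rceil>"
  define hi where "hi = \<lfloor>(X - t) / M\<rfloor>"
  have eq: "{a \<in> BX X. M dvd (a - t)} = (\<lambda>s. t + M * s) ` {lo..hi}"
  proof (intro set_eqI iffI)
    fix a assume A: "a \<in> {a \<in> BX X. M dvd (a - t)}"
    then have b: "\<bar>real_of_int a\<bar> \<le> X" and dv: "M dvd (a - t)" by (simp_all add: BX_def)
    from dv obtain s where s0: "a - t = M*s" by (elim dvdE)
    then have s: "a = t + M*s" by simp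
    have r: "real_of_int a = real_of_int t + real_of_int M * real_of_int s" using s by simp
    have b1: "real_of_int a \<le> X" "- X \<le> real_of_int a" using b by linarith+
    have "real_of_int s * real_of_int M \<le> X - t" "- X - t \<le> real_of_int s * real_of_int M"
      using b1 r by (simp_all add: mult.commute)
    then have "real_of_int s \<le> (X - t)/M" "(- X - t)/M \<le> real_of_int s"
      by (simp_all only: pos_le_divide_eq[OF Mr] pos_divide_le_eq[OF Mr])
    then have "s \<in> {lo..hi}" unfolding lo_def hi_def by (simp only: atLeastAtMost_iff ceiling_le_iff le_floor_iff)
    then show "a \<in> (\<lambda>s. t + M * s) ` {lo..hi}" using s by blast
  next
    fix a assume "a \<in> (\<lambda>s. t + M * s) ` {lo..hi}"
    then obtain s where s0: "s \<in> {lo..hi}" and s: "a = t + M*s" by (rule imageE)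
    from s0 have "lo \<le> s" "s \<le> hi" by simp_all
    then have "real_of_int s \<le> (X - t)/M" "(- X - t)/M \<le> real_of_int s" unfolding lo_def hi_def
      by (simp_all only: ceiling_le_iff le_floor_iff)
    then have "real_of_int s * real_of_int M \<le> X - t" "- X - t \<le> real_of_int s * real_of_int M"
      by (simp_all only: pos_le_divide_eq[OF Mr] pos_divide_le_eq[OF Mr])
    moreover have r: "real_of_int a = real_of_int t + real_of_int M * real_of_int s" using s by simp
    ultimately have "\<bar>real_of_int a\<bar> \<le> X" by (simp add: mult.commute abs_le_iff)
    moreover have "M dvd (a - t)" using s by simp
    ultimately show "a \<in> {a \<in> BX X. M dvd (a - t)}" by (simp add: BX_def)
  qed
  have inj: "inj_on (\<lambda>s. t + M * s) {lo..hi}" using M by (auto simp: inj_on_def)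
  have c: "card {a \<in> BX X. M dvd (a - t)} = nat (hi - lo + 1)"
    unfolding eq card_image[OF inj] by simp
  have h1: "real_of_int hi \<le> (X - t)/M" "(X - t)/M < real_of_int hi + 1" unfolding hi_def using floor_correct[of "(X - t)/M"] by auto
  have l1: "(- X - t)/M \<le> real_of_int lo" "real_of_int lo < (- X - t)/M + 1" unfolding lo_def using ceiling_correct[of "(- X - t)/M"] by auto
  have d: "(X - t)/M - (- X - t)/M = 2 * X / M" by (simp add: diff_divide_distrib[symmetric])
  show ?thesis
  proof (cases "hi - lo + 1 \<ge> 0")
    case True
    then have "real (nat (hi - lo + 1)) = real_of_int hi - real_of_int lo + 1" by simp
    then show ?thesis unfolding c using h1 l1 d by linarith
  next
    case False
    then have "real (nat (hi - lo + 1)) = 0" by simp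
    moreover have "2 * X / M \<ge> 0" using M X by simp
    ultimately show ?thesis unfolding c using h1 l1 d False by linarith
  qed
qed

lemma fiber:
  fixes m c S :: int
  assumes m: "m > 0"
  shows "\<not> gcd m c dvd S \<Longrightarrow> {a \<in> A. m dvd c * a + S} = {}"
    and "gcd m c dvd S \<Longrightarrow> \<exists>t. {a \<in> A. m dvd c * a + S} = {a \<in> A. (m div gcd m c) dvd (a - t)}"
proof -
  show "\<not> gcd m c dvd S \<Longrightarrow> {a \<in> A. m dvd c * a + S} = {}"
  proof (intro equals0I)
    fix x assume n: "\<not> gcd m c dvd S" and x: "x \<in> {a \<in> A. m dvd c * a + S}"
    then have "gcd m c dvd c * x + S" using dvd_trans[OF gcd_dvd1[of m c]] by auto
    moreover have "gcd m c dvd c * x" by simp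
    ultimately show False using n by (simp add: dvd_add_right_iff)
  qed
next
  assume gS: "gcd m c dvd S"
  define g where "g = gcd m c"
  have gpos: "g > 0" using m by (simp add: g_def)
  obtain u v where uv: "u * c + v * m = g" using bezout_int[of c m] by (auto simp: g_def gcd.commute)
  obtain s where s: "S = g * s" using gS g_def by (auto elim: dvdE)
  define t where "t = - u * s"
  have key: "c * a + S = c * (a - t) + m * (v * s)" for a
    unfolding t_def s uv[symmetric] by (simp add: algebra_simps)
  obtain m' where m': "m = g * m'" using gcd_dvd1[of m c] unfolding g_def by (elim dvdE) blast
  obtain c' where c': "c = g * c'" using gcd_dvd2[of m c] unfolding g_def by (elim dvdE) blast
  have md: "m div g = m'" using m' gpos by simp
  have cd: "c div g = c'" using c' gpos by simp
  have cop: "coprime m' c'" using div_gcd_coprime[of m c] m md cd unfolding g_def by simp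
  have "m dvd c * x \<longleftrightarrow> m' dvd x" for x
  proof -
    have "m dvd c * x \<longleftrightarrow> m' dvd c' * x" unfolding m' c' using gpos by (simp add: mult.assoc)
    also have "\<dots> \<longleftrightarrow> m' dvd x" using cop by (simp add: coprime_dvd_mult_right_iff)
    finally show ?thesis .
  qed
  then have "m dvd c * a + S \<longleftrightarrow> m' dvd a - t" for a
    unfolding key by (simp add: dvd_add_left_iff)
  then show "\<exists>t. {a \<in> A. m dvd c * a + S} = {a \<in> A. (m div gcd m c) dvd (a - t)}"
    using md g_def by auto
qed


lemma finite_BX: "finite (BX X)"
proof -
  have "BX X \<subseteq> {- \<lceil>X\<rceil>..\<lceil>X\<rceil>}"
  proof
    fix a assume "a \<in> BX X"
    then have "\<bar>real_of_int a\<bar> \<le> X" by (simp add: BX_def)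
    then have "real_of_int a \<le> of_int \<lceil>X\<rceil>" "- of_int \<lceil>X\<rceil> \<le> real_of_int a"
      using le_of_int_ceiling[of X] by linarith+
    then show "a \<in> {- \<lceil>X\<rceil>..\<lceil>X\<rceil>}" by simp
  qed
  then show ?thesis using finite_subset by blast
qed

lemma card_BX: assumes "X \<ge> 0" shows "real (card (BX X)) \<le> 2 * X + 1"
proof -
  have "{a \<in> BX X. (1::int) dvd (a - 0)} = BX X" by simp
  then show ?thesis using class_count[of 1 X 0] assms by simp
qed

definition cnt :: "nat set \<Rightarrow> (nat \<Rightarrow> int) \<Rightarrow> int \<Rightarrow> real \<Rightarrow> nat" where
  "cnt I c m X = card {\<alpha> \<in> PiE I (\<lambda>_. BX X). m dvd (\<Sum>i\<in>I. c i * \<alpha> i)}"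

lemma decomp:
  fixes B :: "int set" and J :: "nat set" and i :: nat and c :: "nat \<Rightarrow> int" and m :: int
  assumes fJ: "finite J" and iJ: "i \<notin> J" and fB: "finite B"
  shows "card {\<alpha> \<in> PiE (insert i J) (\<lambda>_. B). m dvd (\<Sum>j\<in>insert i J. c j * \<alpha> j)}
       = (\<Sum>\<beta>\<in>PiE J (\<lambda>_. B). card {a \<in> B. m dvd c i * a + (\<Sum>j\<in>J. c j * \<beta> j)})"
proof -
  define F where "F = (\<lambda>(\<beta>::nat\<Rightarrow>int, a::int). \<beta>(i := a))"
  define SG where "SG = (SIGMA \<beta>:PiE J (\<lambda>_. B). {a \<in> B. m dvd c i * a + (\<Sum>j\<in>J. c j * \<beta> j)})"
  have sumeq: "(\<Sum>j\<in>insert i J. c j * (\<beta>(i:=a)) j) = c i * a + (\<Sum>j\<in>J. c j * \<beta> j)" for \<beta> a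
  proof -
    have "(\<Sum>j\<in>J. c j * (\<beta>(i:=a)) j) = (\<Sum>j\<in>J. c j * \<beta> j)"
      by (rule sum.cong) (use iJ in auto)
    then show ?thesis using fJ iJ by simp
  qed
  have inj: "inj_on F SG"
  proof (rule inj_onI)
    fix x y assume x: "x \<in> SG" and y: "y \<in> SG" and e: "F x = F y"
    obtain \<beta> a where xx: "x = (\<beta>, a)" by (cases x)
    obtain \<beta>' a' where yy: "y = (\<beta>', a')" by (cases y)
    have b1: "\<beta> \<in> PiE J (\<lambda>_. B)" "\<beta>' \<in> PiE J (\<lambda>_. B)" using x y xx yy by (auto simp: SG_def)
    have e2: "\<beta>(i := a) = \<beta>'(i := a')" using e xx yy by (simp add: F_def)
    have "a = a'" using fun_cong[OF e2, of i] by simp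
    moreover have "\<beta> = \<beta>'"
    proof
      fix k show "\<beta> k = \<beta>' k"
      proof (cases "k = i")
        case True then show ?thesis using PiE_arb[OF b1(1) iJ] PiE_arb[OF b1(2) iJ] by simp
      next
        case False then show ?thesis using fun_cong[OF e2, of k] by simp
      qed
    qed
    ultimately show "x = y" using xx yy by simp
  qed
  have img: "F ` SG = {\<alpha> \<in> PiE (insert i J) (\<lambda>_. B). m dvd (\<Sum>j\<in>insert i J. c j * \<alpha> j)}"
  proof (intro set_eqI iffI)
    fix \<alpha> assume "\<alpha> \<in> F ` SG"
    then obtain \<beta> a where ba: "(\<beta>, a) \<in> SG" and al: "\<alpha> = \<beta>(i := a)" unfolding F_def by auto
    have "\<beta> \<in> PiE J (\<lambda>_. B)" "a \<in> B" "m dvd c i * a + (\<Sum>j\<in>J. c j * \<beta> j)" using ba by (auto simp: SG_def)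
    then show "\<alpha> \<in> {\<alpha> \<in> PiE (insert i J) (\<lambda>_. B). m dvd (\<Sum>j\<in>insert i J. c j * \<alpha> j)}"
      unfolding al using sumeq[of \<beta> a] by (auto simp: PiE_iff extensional_def)
  next
    fix \<alpha> assume A: "\<alpha> \<in> {\<alpha> \<in> PiE (insert i J) (\<lambda>_. B). m dvd (\<Sum>j\<in>insert i J. c j * \<alpha> j)}"
    define \<beta> where "\<beta> = \<alpha>(i := undefined)"
    have al: "\<alpha> = \<beta>(i := \<alpha> i)" by (simp add: \<beta>_def)
    have "\<beta> \<in> PiE J (\<lambda>_. B)" using A iJ by (auto simp: \<beta>_def PiE_iff extensional_def)
    moreover have "\<alpha> i \<in> B" using A by (auto simp: PiE_iff)
    moreover have "m dvd c i * \<alpha> i + (\<Sum>j\<in>J. c j * \<beta> j)" using A sumeq[of \<beta> "\<alpha> i"] by (simp add: al[symmetric])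
    ultimately have "(\<beta>, \<alpha> i) \<in> SG" by (simp add: SG_def)
    moreover have "F (\<beta>, \<alpha> i) = \<alpha>" unfolding F_def using al[symmetric] by simp
    ultimately show "\<alpha> \<in> F ` SG" by (metis image_eqI)
  qed
  have "card {\<alpha> \<in> PiE (insert i J) (\<lambda>_. B). m dvd (\<Sum>j\<in>insert i J. c j * \<alpha> j)} = card SG"
    using card_image[OF inj] img by simp
  also have "\<dots> = (\<Sum>\<beta>\<in>PiE J (\<lambda>_. B). card {a \<in> B. m dvd c i * a + (\<Sum>j\<in>J. c j * \<beta> j)})"
    unfolding SG_def using fJ fB by (simp add: finite_PiE)
  finally show ?thesis .
qed


lemma count_main:
  "\<exists>K. \<forall>(I::nat set) (c::nat\<Rightarrow>int) (m::int) (X::real). finite I \<and> card I = k \<and> m > 0 \<and> X \<ge> 1 \<longrightarrow>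
     \<bar>real (cnt I c m X) - (2*X)^k * of_int (gcd m (Gcd (c`I))) / of_int m\<bar> \<le> K * X^k / X"
proof (induction k)
  case 0
  show ?case
  proof (intro exI[of _ 0] allI impI)
    fix I :: "nat set" and c :: "nat \<Rightarrow> int" and m :: int and X :: real
    assume H: "finite I \<and> card I = 0 \<and> m > 0 \<and> X \<ge> 1"
    then have I: "I = {}" by auto
    have "cnt I c m X = 1" unfolding I cnt_def by simp
    moreover have "gcd m (Gcd (c`I)) = m" using H I by simp
    ultimately show "\<bar>real (cnt I c m X) - (2*X)^0 * of_int (gcd m (Gcd (c`I))) / of_int m\<bar> \<le> 0 * X^0 / X"
      using H by simp
  qed
next
  case (Suc k)
  obtain K where K: "\<And>(I::nat set) (c::nat\<Rightarrow>int) (m::int) (X::real). finite I \<Longrightarrow> card I = k \<Longrightarrow> m > 0 \<Longrightarrow> X \<ge> 1 \<Longrightarrow>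
     \<bar>real (cnt I c m X) - (2*X)^k * of_int (gcd m (Gcd (c`I))) / of_int m\<bar> \<le> K * X^k / X"
    using Suc.IH by blast
  show ?case
  proof (intro exI[of _ "3^k + 2*K"] allI impI)
    fix I :: "nat set" and c :: "nat \<Rightarrow> int" and m :: int and X :: real
    assume H: "finite I \<and> card I = Suc k \<and> m > 0 \<and> X \<ge> 1"
    then have fI: "finite I" and cI: "card I = Suc k" and m: "m > 0" and X: "X \<ge> 1" by auto
    obtain i where i: "i \<in> I" using cI by (metis card.empty ex_in_conv nat.simps(3))
    define J where "J = I - {i}"
    have IJ: "I = insert i J" and iJ: "i \<notin> J" and fJ: "finite J" and cJ: "card J = k"
      using i fI cI by (auto simp: J_def)
    define g where "g = gcd m (c i)"
    have gpos: "g > 0" using m by (simp add: g_def)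
    have gm: "g \<le> m" using m by (simp add: g_def)
    have gdm: "g dvd m" by (simp add: g_def)
    define S where "S \<beta> = (\<Sum>j\<in>J. c j * \<beta> j)" for \<beta> :: "nat \<Rightarrow> int"
    define P where "P = PiE J (\<lambda>_. BX X)"
    define T where "T = {\<beta> \<in> P. g dvd S \<beta>}"
    define f where "f \<beta> = card {a \<in> BX X. m dvd c i * a + S \<beta>}" for \<beta>
    have fP: "finite P" unfolding P_def using fJ finite_BX by (simp add: finite_PiE)
    have N: "cnt I c m X = (\<Sum>\<beta>\<in>P. f \<beta>)"
      unfolding cnt_def IJ f_def S_def P_def using decomp[OF fJ iJ finite_BX] by simp
    have N2: "(\<Sum>\<beta>\<in>P. f \<beta>) = (\<Sum>\<beta>\<in>T. f \<beta>)"
    proof (rule sum.mono_neutral_right[OF fP])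
      show "T \<subseteq> P" by (auto simp: T_def)
      show "\<forall>\<beta>\<in>P - T. f \<beta> = 0"
      proof
        fix \<beta> assume "\<beta> \<in> P - T"
        then have "\<not> g dvd S \<beta>" by (auto simp: T_def)
        then have "{a \<in> BX X. m dvd c i * a + S \<beta>} = {}" using fiber(1)[OF m, of "c i" "S \<beta>" "BX X"] g_def by blast
        then show "f \<beta> = 0" unfolding f_def by (simp only: card.empty)
      qed
    qed
    have q: "2 * X / real_of_int (m div g) = 2 * X * g / m"
      using gdm gpos by (simp add: of_int_div)
    have fb: "\<bar>real (f \<beta>) - 2 * X * g / m\<bar> \<le> 1" if "\<beta> \<in> T" for \<beta>
    proof -
      have "g dvd S \<beta>" using that by (simp add: T_def)
      then obtain t where t: "{a \<in> BX X. m dvd c i * a + S \<beta>} = {a \<in> BX X. (m div g) dvd (a - t)}"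
        using fiber(2)[OF m, of "c i" "S \<beta>" "BX X"] g_def by auto
      obtain kk where kk: "m = g * kk" using gdm by (elim dvdE)
      have "kk > 0" using kk m gpos by (simp add: zero_less_mult_iff)
      then have mg: "m div g > 0" using kk gpos by simp
      show ?thesis using class_count[OF mg, of X t] X unfolding f_def t q by simp
    qed
    define q0 where "q0 = 2 * X * g / m"
    have q0nn: "q0 \<ge> 0" "q0 \<le> 2 * X" using gpos gm m X unfolding q0_def by (auto simp: field_simps)
    have E1: "\<bar>real (cnt I c m X) - real (card T) * q0\<bar> \<le> real (card T)"
    proof -
      have "real (cnt I c m X) - real (card T) * q0 = (\<Sum>\<beta>\<in>T. real (f \<beta>) - q0)"
        unfolding N N2 by (simp add: sum_subtractf)
      also have "\<bar>\<dots>\<bar> \<le> (\<Sum>\<beta>\<in>T. \<bar>real (f \<beta>) - q0\<bar>)" by (rule sum_abs)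
      also have "\<dots> \<le> (\<Sum>\<beta>\<in>T. 1)" by (rule sum_mono) (use fb q0_def in auto)
      finally show ?thesis by simp
    qed
    have cT: "card T = cnt J c g X" by (simp add: cnt_def T_def S_def P_def)
    have G: "gcd g (Gcd (c`J)) = gcd m (Gcd (c`I))" by (simp add: IJ g_def gcd.assoc)
    define M1 where "M1 = (2*X)^k * of_int (gcd m (Gcd (c`I))) / of_int g"
    have IH: "\<bar>real (card T) - M1\<bar> \<le> K * X^k / X"
      using K[OF fJ cJ gpos X, of c] unfolding cT M1_def G .
    have Tb: "real (card T) \<le> 3^k * X^k"
    proof -
      have "card T \<le> card P" using fP by (auto simp: T_def intro: card_mono)
      also have "card P = card (BX X) ^ k" unfolding P_def using fJ cJ by (simp add: card_PiE)
      finally have "real (card T) \<le> real (card (BX X)) ^ k" by (metis of_nat_le_iff of_nat_power)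
      also have "\<dots> \<le> (2 * X + 1) ^ k" using card_BX[of X] X by (intro power_mono) auto
      also have "\<dots> \<le> (3 * X) ^ k" using X by (intro power_mono) auto
      finally show ?thesis by (simp add: power_mult_distrib)
    qed
    have main: "(2*X)^(Suc k) * of_int (gcd m (Gcd (c`I))) / of_int m = q0 * M1"
      unfolding q0_def M1_def using gpos by (simp add: field_simps)
    have "\<bar>real (cnt I c m X) - q0 * M1\<bar> \<le> \<bar>real (cnt I c m X) - real (card T) * q0\<bar> + q0 * \<bar>real (card T) - M1\<bar>"
    proof -
      have "real (cnt I c m X) - q0 * M1 = (real (cnt I c m X) - real (card T) * q0) + q0 * (real (card T) - M1)"
        by (simp add: algebra_simps)
      moreover have "\<bar>q0 * (real (card T) - M1)\<bar> = q0 * \<bar>real (card T) - M1\<bar>"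
        using q0nn by (simp add: abs_mult)
      ultimately show ?thesis
        using abs_triangle_ineq[of "real (cnt I c m X) - real (card T) * q0" "q0 * (real (card T) - M1)"] by simp
    qed
    also have "\<dots> \<le> real (card T) + 2 * X * (K * X^k / X)"
      using E1 IH q0nn by (intro add_mono mult_mono) auto
    also have "\<dots> \<le> (3^k + 2*K) * X^(Suc k) / X"
      using Tb X by (simp add: field_simps)
    finally show "\<bar>real (cnt I c m X) - (2*X)^(Suc k) * of_int (gcd m (Gcd (c`I))) / of_int m\<bar> \<le> (3^k + 2*K) * X^(Suc k) / X"
      unfolding main .
  qed
qed

lemma odd_bit: "0 < (h::nat) \<Longrightarrow> h < 2^n \<Longrightarrow> \<exists>t<n. odd (h div 2^t)"
proof (induction n arbitrary: h)
  case 0 then show ?case by simp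
next
  case (Suc n)
  show ?case
  proof (cases "odd h")
    case True then show ?thesis by (intro exI[of _ 0]) simp
  next
    case False
    then obtain h' where h: "h = 2*h'" by (auto elim: evenE)
    have "0 < h'" "h' < 2^n" using Suc.prems h by auto
    from Suc.IH[OF this] obtain t where t: "t<n" "odd (h' div 2^t)" by blast
    have "h div 2^(Suc t) = h' div 2^t" using h by (simp add: div_mult2_eq)
    then show ?thesis using t by (intro exI[of _ "Suc t"]) simp
  qed
qed

lemma eps_cases: "eps j h = 0 \<or> eps j h = 1"
  unfolding eps_def by presburger

lemma bit_exists: "h \<in> idxN n \<Longrightarrow> \<exists>j\<in>{1..n}. eps j h = 1"
proof -
  assume "h \<in> idxN n"
  then have "0 < h" "h < 2^n" by (auto simp: idxN_def)
  from odd_bit[OF this] obtain t where t: "t < n" "odd (h div 2^t)" by blast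
  then have "eps (Suc t) h = 1" by (simp add: eps_def odd_iff_mod_2_eq_one)
  then show ?thesis using t by (intro bexI[of _ "Suc t"]) auto
qed

lemma key_prime:
  assumes R: "reduced_rep n y z" and p: "prime (p::nat)" and pd: "p dvd d1r n z r" and rn: "r \<le> n"
  shows "\<exists>j\<in>{r+1..n}. \<not> p dvd dd n z j"
proof -
  have fin: "finite (idxN n)" by (simp add: idxN_def)
  define H where "H = {h\<in>idxN n. \<forall>i\<in>{1..r}. eps i h = 0}"
  have fH: "finite H" using fin by (simp add: H_def)
  have "p dvd (\<Prod>h\<in>H. z h)" using pd by (simp add: d1r_def H_def)
  then obtain h1 where h1H: "h1 \<in> H" and h1p: "p dvd z h1"
    using prime_dvd_prod_iff[OF fH p] by blast
  define C where "C = {h \<in> idxN n. p dvd z h \<and> prec n h h1}"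
  define bits where "bits h = {j\<in>{1..n}. eps j h = 1}" for h
  have precrefl: "prec n h h" for h by (simp add: prec_def)
  have h1C: "h1 \<in> C" using h1H h1p by (simp add: C_def H_def precrefl)
  obtain h0 where h0C: "h0 \<in> C" and h0min: "\<And>h. h \<in> C \<Longrightarrow> card (bits h0) \<le> card (bits h)"
    using ex_has_least_nat[of "\<lambda>h. h \<in> C" h1 "\<lambda>h. card (bits h)"] h1C by blast
  have h0: "h0 \<in> idxN n" "p dvd z h0" "prec n h0 h1" using h0C by (auto simp: C_def)
  have h0r: "eps i h0 = 0" if "i \<in> {1..r}" for i
  proof -
    have "eps i h0 \<le> eps i h1" using h0(3) that rn by (auto simp: prec_def)
    moreover have "eps i h1 = 0" using h1H that by (auto simp: H_def)
    ultimately show ?thesis by simp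
  qed
  obtain j where j: "j \<in> {1..n}" "eps j h0 = 1" using bit_exists[OF h0(1)] by blast
  have jr: "j > r"
  proof (rule ccontr)
    assume "\<not> r < j" then have "j \<in> {1..r}" using j by auto
    then show False using h0r j by simp
  qed
  show ?thesis
  proof (intro bexI[of _ j] notI)
    show "j \<in> {r+1..n}" using j jr by auto
    assume "p dvd dd n z j"
    then obtain h where h: "h \<in> idxN n" "p dvd z h ^ (1 - eps j h)"
      using prime_dvd_prod_iff[OF fin p] by (auto simp: dd_def)
    have e0: "eps j h = 0"
    proof (rule ccontr)
      assume "eps j h \<noteq> 0" then have "eps j h = 1" using eps_cases[of j h] by simp
      then have "p dvd 1" using h by simp
      then show False using p by simp
    qed
    then have hp: "p dvd z h" using h by simp
    have comp: "prec n h h0 \<or> prec n h0 h"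
    proof (rule ccontr)
      assume "\<not> (prec n h h0 \<or> prec n h0 h)"
      then have "coprime (z h) (z h0)" using R h(1) h0(1) by (auto simp: reduced_rep_def)
      then have "is_unit p" using hp h0(2) coprime_common_divisor by blast
      then show False using p by simp
    qed
    then show False
    proof
      assume "prec n h0 h"
      then have "eps j h0 \<le> eps j h" using j(1) unfolding prec_def by blast
      then show False using j e0 by simp
    next
      assume hh0: "prec n h h0"
      have "prec n h h1" using hh0 h0(3) unfolding prec_def using le_trans by blast
      then have "h \<in> C" using h(1) hp by (simp add: C_def)
      then have cle: "card (bits h0) \<le> card (bits h)" by (rule h0min)
      have sub: "bits h \<subseteq> bits h0"
      proof
        fix i assume "i \<in> bits h"
        then have i: "i \<in> {1..n}" "eps i h = 1" by (auto simp: bits_def)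
        then have "eps i h \<le> eps i h0" using hh0 i(1) unfolding prec_def by blast
        then have "eps i h0 = 1" using i eps_cases[of i h0] by auto
        then show "i \<in> bits h0" using i by (simp add: bits_def)
      qed
      have "bits h = bits h0" by (rule card_seteq) (use sub cle in \<open>auto simp: bits_def\<close>)
      moreover have "j \<in> bits h0" using j by (simp add: bits_def)
      ultimately have "j \<in> bits h" by simp
      then have "eps j h = 1" by (simp add: bits_def)
      then show False using e0 by simp
    qed
  qed
qed

lemma prod_split:
  assumes rn: "r \<le> n"
  shows "d1r n z r = (\<Prod>j=r+1..n. d1sup n z (j-1))"
proof -
  have fin: "finite (idxN n)" by (simp add: idxN_def)
  define H where "H = {h\<in>idxN n. \<forall>i\<in>{1..r}. eps i h = 0}"
  have fH: "finite H" using fin by (simp add: H_def)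
  define g where "g h = (LEAST j. 1 \<le> j \<and> eps j h = 1)" for h
  have gprop: "1 \<le> g h \<and> g h \<le> n \<and> eps (g h) h = 1 \<and> (\<forall>i. 1 \<le> i \<and> i < g h \<longrightarrow> eps i h = 0)"
    if hI: "h \<in> idxN n" for h
  proof -
    obtain j0 where j0: "j0 \<in> {1..n}" "eps j0 h = 1" using bit_exists[OF hI] by blast
    have P: "1 \<le> j0 \<and> eps j0 h = 1" using j0 by simp
    have a: "1 \<le> g h \<and> eps (g h) h = 1" unfolding g_def by (rule LeastI[of _ j0]) (rule P)
    have b: "g h \<le> j0" unfolding g_def by (rule Least_le) (rule P)
    have c: "eps i h = 0" if "1 \<le> i" "i < g h" for i
    proof -
      have "\<not> (1 \<le> i \<and> eps i h = 1)" using not_less_Least[of i "\<lambda>j. 1 \<le> j \<and> eps j h = 1"] that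
        unfolding g_def by blast
      then show ?thesis using that eps_cases[of i h] by auto
    qed
    show ?thesis using a b c j0 by auto
  qed
  have img: "g ` H \<subseteq> {r+1..n}"
  proof
    fix x assume "x \<in> g ` H"
    then obtain h where hH: "h \<in> H" and x: "x = g h" by blast
    have hI: "h \<in> idxN n" using hH by (simp add: H_def)
    have "g h > r"
    proof (rule ccontr)
      assume "\<not> r < g h"
      then have "g h \<in> {1..r}" using gprop[OF hI] by auto
      then have "eps (g h) h = 0" using hH by (auto simp: H_def)
      then show False using gprop[OF hI] by simp
    qed
    then show "x \<in> {r+1..n}" using gprop[OF hI] x by auto
  qed
  have "d1r n z r = (\<Prod>h\<in>H. z h)" by (simp add: d1r_def H_def)
  also have "\<dots> = (\<Prod>j\<in>{r+1..n}. \<Prod>h\<in>{x. x \<in> H \<and> g x = j}. z h)"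
    by (rule prod.group[symmetric]) (use fH img in auto)
  also have "\<dots> = (\<Prod>j=r+1..n. d1sup n z (j-1))"
  proof (rule prod.cong[OF refl])
    fix j assume j: "j \<in> {r+1..n}"
    have "{x. x \<in> H \<and> g x = j} = {h\<in>idxN n. (\<forall>i\<in>{1..j-1}. eps i h = 0) \<and> eps (j - 1 + 1) h = 1}"
    proof (intro set_eqI iffI)
      fix h assume "h \<in> {x. x \<in> H \<and> g x = j}"
      then have hH: "h \<in> H" and gh: "g h = j" by auto
      have hI: "h \<in> idxN n" using hH by (simp add: H_def)
      have "j - 1 + 1 = j" using j by auto
      then show "h \<in> {h\<in>idxN n. (\<forall>i\<in>{1..j-1}. eps i h = 0) \<and> eps (j - 1 + 1) h = 1}"
        using gprop[OF hI] gh hI by auto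
    next
      fix h assume A: "h \<in> {h\<in>idxN n. (\<forall>i\<in>{1..j-1}. eps i h = 0) \<and> eps (j - 1 + 1) h = 1}"
      have jj: "j - 1 + 1 = j" using j by auto
      have hI: "h \<in> idxN n" and z: "\<And>i. i \<in> {1..j-1} \<Longrightarrow> eps i h = 0" and o: "eps j h = 1"
        using A jj by auto
      have "g h = j" unfolding g_def
      proof (rule Least_equality)
        show "1 \<le> j \<and> eps j h = 1" using j o by auto
        fix y assume y: "1 \<le> y \<and> eps y h = 1"
        show "j \<le> y"
        proof (rule ccontr)
          assume "\<not> j \<le> y" then have "y \<in> {1..j-1}" using y by auto
          then have "eps y h = 0" by (rule z)
          then show False using y by simp
        qed
      qed
      moreover have "h \<in> H" unfolding H_def using hI z j by auto
      ultimately show "h \<in> {x. x \<in> H \<and> g x = j}" by simp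
    qed
    then show "(\<Prod>h\<in>{x. x \<in> H \<and> g x = j}. z h) = d1sup n z (j-1)" unfolding d1sup_def by simp
  qed
  finally show ?thesis .
qed


theorem mainTheorem3:
  fixes n r :: nat
  assumes "n \<ge> 3" and "1 \<le> r" and "r \<le> n - 1"
  shows "\<exists>C::real. \<forall>(y::nat \<Rightarrow> nat) (z::nat \<Rightarrow> nat) (X::real).
           (\<forall>j\<in>{1..n}. y j > 0) \<and> reduced_rep n y z \<and> X \<ge> 1 \<longrightarrow>
           \<bar>real (card (A_set n z r X))
              - 2 ^ (n - r) * (\<Prod>j=r+1..n. X / real (d1sup n z (j - 1)))\<bar>
             \<le> C * X ^ (n - r - 1)"
proof -
  define k where "k = n - r"
  have k1: "k \<ge> 1" and rn: "r \<le> n" using assms by (auto simp: k_def)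
  obtain K where K: "\<forall>(I::nat set) (c::nat\<Rightarrow>int) (m::int) (X::real). finite I \<and> card I = k \<and> m > 0 \<and> X \<ge> 1 \<longrightarrow>
     \<bar>real (cnt I c m X) - (2*X)^k * of_int (gcd m (Gcd (c`I))) / of_int m\<bar> \<le> K * X^k / X"
    using count_main by blast
  show ?thesis
  proof (intro exI[of _ K] allI impI)
    fix y z :: "nat \<Rightarrow> nat" and X :: real
    assume H: "(\<forall>j\<in>{1..n}. y j > 0) \<and> reduced_rep n y z \<and> X \<ge> 1"
    then have R: "reduced_rep n y z" and X: "X \<ge> 1" by auto
    define I where "I = {r+1..n}"
    define c where "c i = int (dd n z i)" for i
    define m where "m = int (d1r n z r)"
    have zpos: "\<forall>h\<in>idxN n. z h > 0" using R by (simp add: reduced_rep_def)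
    have d1pos: "d1r n z r > 0" unfolding d1r_def using zpos by (auto intro: prod_pos)
    have mpos: "m > 0" using d1pos by (simp add: m_def)
    have fI: "finite I" and cI: "card I = k" by (auto simp: I_def k_def)
    have cntA: "cnt I c m X = card (A_set n z r X)"
      by (simp add: cnt_def A_set_def BX_def I_def c_def m_def)
    have G: "gcd m (Gcd (c`I)) = 1"
    proof (rule ccontr)
      assume ne: "gcd m (Gcd (c ` I)) \<noteq> 1"
      have Gpos: "gcd m (Gcd (c ` I)) > 0" using mpos by simp
      then have "nat (gcd m (Gcd (c ` I))) \<noteq> 1" using ne by simp
      then obtain p where p: "prime p" "p dvd nat (gcd m (Gcd (c`I)))" using prime_factor_nat by blast
      have "int p dvd int (nat (gcd m (Gcd (c`I))))" using p(2) by (simp only: int_dvd_int_iff)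
      then have pG: "int p dvd gcd m (Gcd (c`I))" using Gpos by simp
      have "int p dvd m" using pG by (rule dvd_trans) simp
      then have "p dvd d1r n z r" by (simp add: m_def)
      then obtain j where j: "j \<in> {r+1..n}" "\<not> p dvd dd n z j" using key_prime[OF R p(1) _ rn] by blast
      have "Gcd (c`I) dvd c j" using j(1) by (simp add: I_def)
      then have "int p dvd c j" using pG by (meson dvd_trans gcd_dvd2)
      then have "p dvd dd n z j" by (simp add: c_def)
      then show False using j by simp
    qed
    have dprod: "real (d1r n z r) = (\<Prod>j=r+1..n. real (d1sup n z (j - 1)))"
      using prod_split[OF rn, of z] by simp
    have main: "(2*X)^k * of_int (gcd m (Gcd (c`I))) / of_int m
        = 2 ^ (n - r) * (\<Prod>j=r+1..n. X / real (d1sup n z (j - 1)))"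
    proof -
      have "(\<Prod>j=r+1..n. X / real (d1sup n z (j - 1))) = X ^ k / (\<Prod>j=r+1..n. real (d1sup n z (j - 1)))"
        by (simp add: prod_dividef k_def)
      moreover have "(2*X)^k * of_int (gcd m (Gcd (c`I))) / of_int m = 2^k * X^k / real (d1r n z r)"
        unfolding G by (simp add: m_def power_mult_distrib)
      ultimately show ?thesis unfolding dprod k_def by simp
    qed
    have bnd: "K * X^k / X = K * X ^ (n - r - 1)"
    proof -
      have kk: "k = Suc (n - r - 1)" using k1 by (simp add: k_def)
      have "X^k = X * X^(n - r - 1)" by (subst kk) simp
      then show ?thesis using X by simp
    qed
    show "\<bar>real (card (A_set n z r X)) - 2 ^ (n - r) * (\<Prod>j=r+1..n. X / real (d1sup n z (j - 1)))\<bar>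
             \<le> K * X ^ (n - r - 1)"
      using K[THEN spec[of _ I], THEN spec[of _ c], THEN spec[of _ m], THEN spec[of _ X]] fI cI mpos X unfolding cntA main bnd by simp
  qed
qed

end
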